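(* Let $\alpha$ be a unit speed Frenet curve in $\mathbb{E}^3$ and $\beta$ an osculating mate of $\alpha$ with unit tangent $\bar T$. The following are equivalent: (i) the tangent indicatrix $\bar T$ of $\beta$ is a general helix; (ii) $\beta$ is a slant helix; (iii) $\alpha$ is a general helix.
   Context: $\alpha:I\to\mathbb{E}^3$ is parametrized by arclength $s$, with Frenet frame $\{T,N,B\}$, curvature $\kappa>0$, torsion $\tau$. An osculating mate of $\alpha$ is a curve $\beta(s)=\int(x_1T+x_2N)ds$ with smooth $x_1,x_2$, $x_1^2+x_2^2=1$ and $\beta''\perp\mathrm{span}\{T,N\}$; $\beta$ is assumed to be a Frenet curve, unit speed in $s$, with Frenet frame $\{\bar T,\bar N,\bar B\}$. The tangent indicatrix of $\beta$ is the spherical curve $s\mapsto\bar T(s)$. A general helix is a curve whose tangent makes a constant angle with a fixed direction (equivalently, the ratio torsion/curvature is constant). A slant helix is a curve whose principal normal makes a constant angle with a fixed direction (equivalently $\frac{k^2}{(k^2+t^2)^{3/2}}(t/k)'$ is constant, $k,t$ its curvature and torsion). *)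

theory Defs
  imports "HOL-Analysis.Analysis"
begin

fun vderiv :: "nat \<Rightarrow> (real \<Rightarrow> 'a::real_normed_vector) \<Rightarrow> real \<Rightarrow> 'a" where
  "vderiv 0 f = f"
| "vderiv (Suc n) f = (\<lambda>t. vector_derivative (vderiv n f) (at t))"

definition smooth_on :: "(real \<Rightarrow> 'a::real_normed_vector) \<Rightarrow> real set \<Rightarrow> bool" where
  "smooth_on f I \<longleftrightarrow>
     (\<forall>n. \<forall>t\<in>I. (vderiv n f has_vector_derivative vderiv (Suc n) f t) (at t))"

definition tangent :: "(real \<Rightarrow> real^3) \<Rightarrow> real \<Rightarrow> real^3" where
  "tangent \<gamma> s = vderiv 1 \<gamma> s"

definition curvature :: "(real \<Rightarrow> real^3) \<Rightarrow> real \<Rightarrow> real" where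
  "curvature \<gamma> s = norm (vderiv 2 \<gamma> s)"

definition normal :: "(real \<Rightarrow> real^3) \<Rightarrow> real \<Rightarrow> real^3" where
  "normal \<gamma> s = (1 / curvature \<gamma> s) *\<^sub>R vderiv 2 \<gamma> s"

definition unit_speed_frenet_curve :: "(real \<Rightarrow> real^3) \<Rightarrow> real set \<Rightarrow> bool" where
  "unit_speed_frenet_curve \<gamma> I \<longleftrightarrow>
     smooth_on \<gamma> I \<and> (\<forall>s\<in>I. norm (tangent \<gamma> s) = 1 \<and> curvature \<gamma> s > 0)"

definition osculating_mate :: "(real \<Rightarrow> real^3) \<Rightarrow> (real \<Rightarrow> real^3) \<Rightarrow> real set \<Rightarrow> bool" where
  "osculating_mate \<alpha> \<beta> I \<longleftrightarrow>
     (\<exists>x1 x2 :: real \<Rightarrow> real. smooth_on x1 I \<and> smooth_on x2 I \<and>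
        (\<forall>s\<in>I. (x1 s)\<^sup>2 + (x2 s)\<^sup>2 = 1 \<and>
           (\<beta> has_vector_derivative (x1 s *\<^sub>R tangent \<alpha> s + x2 s *\<^sub>R normal \<alpha> s)) (at s) \<and>
           inner (vderiv 2 \<beta> s) (tangent \<alpha> s) = 0 \<and>
           inner (vderiv 2 \<beta> s) (normal \<alpha> s) = 0))"

definition general_helix :: "(real \<Rightarrow> real^3) \<Rightarrow> real set \<Rightarrow> bool" where
  "general_helix \<gamma> I \<longleftrightarrow>
     (\<forall>s\<in>I. vderiv 1 \<gamma> s \<noteq> 0) \<and>
     (\<exists>u c. norm u = 1 \<and>
        (\<forall>s\<in>I. inner ((1 / norm (vderiv 1 \<gamma> s)) *\<^sub>R vderiv 1 \<gamma> s) u = c))"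

definition slant_helix :: "(real \<Rightarrow> real^3) \<Rightarrow> real set \<Rightarrow> bool" where
  "slant_helix \<gamma> I \<longleftrightarrow> (\<exists>u c. norm u = 1 \<and> (\<forall>s\<in>I. inner (normal \<gamma> s) u = c))"

end

theory Submission
  imports Defs
begin

lemma unit_deriv:
  fixes g :: "real \<Rightarrow> 'a::real_inner"
  assumes "(g has_vector_derivative g') (at s)" and "g s \<noteq> 0"
  shows "\<exists>D. ((\<lambda>t. (1 / norm (g t)) *\<^sub>R g t) has_vector_derivative D) (at s)"
proof -
  have n: "((\<lambda>t. norm (g t)) has_real_derivative inner (sgn (g s)) g') (at s)"
  proof -
    have "((\<lambda>t. norm (g t)) has_derivative (\<lambda>h. inner (sgn (g s)) (h *\<^sub>R g'))) (at s)"
      using has_derivative_compose[OF assms(1)[unfolded has_vector_derivative_def] has_derivative_norm[OF assms(2)]]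
      by (simp add: inner_commute)
    moreover have "(\<lambda>h. h * inner (sgn (g s)) g') = (*) (inner (sgn (g s)) g')" by (rule ext) simp
    ultimately show ?thesis by (simp add: has_field_derivative_def)
  qed
  have "((\<lambda>t. inverse (norm (g t))) has_real_derivative - (inner (sgn (g s)) g' * inverse ((norm (g s)) ^ Suc (Suc 0)))) (at s)"
    by (rule DERIV_inverse_fun[OF n]) (simp add: assms(2))
  from has_vector_derivative_scaleR[OF this assms(1)]
  have "\<exists>D. ((\<lambda>t. inverse (norm (g t)) *\<^sub>R g t) has_vector_derivative D) (at s)" by blast
  then show ?thesis by (simp add: inverse_eq_divide)
qed

lemma smooth_D:
  assumes "smooth_on f I" "t \<in> I"
  shows "(vderiv n f has_vector_derivative vderiv (Suc n) f t) (at t)"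
  using assms unfolding smooth_on_def by blast

lemma vderiv1: "vderiv 1 f = (\<lambda>t. vector_derivative f (at t))"
  by simp

lemma vderiv2: "vderiv 2 f = (\<lambda>t. vector_derivative (vderiv 1 f) (at t))"
  by (simp add: numeral_2_eq_2)

lemma const_inner:
  fixes f g :: "real \<Rightarrow> 'a::real_inner"
  assumes "open I" "s \<in> I" "(f has_vector_derivative f') (at s)"
    "(g has_vector_derivative g') (at s)" "\<forall>t\<in>I. inner (f t) (g t) = c"
  shows "inner (f s) g' + inner f' (g s) = 0"
proof -
  have a: "((\<lambda>t. inner (f t) (g t)) has_vector_derivative (inner (f s) g' + inner f' (g s))) (at s)"
    using bounded_bilinear.has_vector_derivative[OF bounded_bilinear_inner assms(3,4)] by simp
  have "((\<lambda>t. c) has_vector_derivative 0) (at s)" by simp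
  then have b: "((\<lambda>t. inner (f t) (g t)) has_vector_derivative 0) (at s)"
    by (rule has_vector_derivative_transform_within_open[OF _ assms(1,2)]) (use assms(5) in auto)
  show ?thesis using vector_derivative_at[OF a] vector_derivative_at[OF b] by simp
qed

lemma inner_const_from_deriv:
  fixes f :: "real \<Rightarrow> 'a::real_inner"
  assumes "convex I" "\<forall>s\<in>I. (f has_vector_derivative f' s) (at s)" "\<forall>s\<in>I. inner (f' s) u = 0"
  shows "\<exists>c. \<forall>s\<in>I. inner (f s) u = c"
proof (rule has_field_derivative_zero_constant[OF assms(1)])
  fix x assume x: "x \<in> I"
  have "((\<lambda>t. inner (f t) u) has_vector_derivative inner (f' x) u) (at x)"
    using bounded_linear.has_vector_derivative[OF bounded_linear_inner_left] assms(2) x by blast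
  then show "((\<lambda>t. inner (f t) u) has_field_derivative 0) (at x within I)"
    using assms(3) x by (auto simp: has_real_derivative_iff_has_vector_derivative[symmetric] intro: has_field_derivative_at_within)
qed

lemma decomp3:
  fixes e1 e2 e3 v :: "real^3"
  assumes "inner e1 e1 = 1" "inner e2 e2 = 1" "inner e3 e3 = 1"
    "inner e1 e2 = 0" "inner e1 e3 = 0" "inner e2 e3 = 0"
  shows "v = inner v e1 *\<^sub>R e1 + inner v e2 *\<^sub>R e2 + inner v e3 *\<^sub>R e3"
proof -
  define B where "B = {e1, e2, e3}"
  have d: "e1 \<noteq> e2" "e1 \<noteq> e3" "e2 \<noteq> e3" using assms by auto
  have po: "pairwise orthogonal B" using assms d
    by (auto simp: B_def pairwise_def orthogonal_def inner_commute)
  have z: "0 \<notin> B" using assms by (auto simp: B_def)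
  have ind: "independent B" by (rule pairwise_orthogonal_independent[OF po z])
  have c: "card B = 3" using d by (simp add: B_def)
  have "UNIV \<subseteq> span B"
    by (rule card_ge_dim_independent[OF _ ind]) (simp_all add: c)
  define w where "w = v - (inner v e1 *\<^sub>R e1 + inner v e2 *\<^sub>R e2 + inner v e3 *\<^sub>R e3)"
  have sym: "inner e2 e1 = 0" "inner e3 e1 = 0" "inner e3 e2 = 0" using assms by (simp_all add: inner_commute)
  have "inner w e1 = 0" "inner w e2 = 0" "inner w e3 = 0"
    using assms sym by (simp_all add: w_def inner_diff_left inner_add_left)
  then have ow: "\<And>y. y \<in> B \<Longrightarrow> orthogonal w y"
    by (auto simp: B_def orthogonal_def)
  have "orthogonal w w"
    using orthogonal_to_span[OF _ ow] \<open>UNIV \<subseteq> span B\<close> by auto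
  then have "w = 0" by (simp add: orthogonal_self)
  then show ?thesis unfolding w_def by (simp only: right_minus_eq)
qed


theorem theorem14:
  fixes \<alpha> \<beta> :: "real \<Rightarrow> real^3" and I :: "real set"
  assumes "open I" and "is_interval I" and "I \<noteq> {}"
    and "unit_speed_frenet_curve \<alpha> I"
    and "osculating_mate \<alpha> \<beta> I"
    and "unit_speed_frenet_curve \<beta> I"
  shows "(general_helix (tangent \<beta>) I \<longleftrightarrow> slant_helix \<beta> I)
       \<and> (slant_helix \<beta> I \<longleftrightarrow> general_helix \<alpha> I)"
proof -
  have opI: "open I" by fact
  have cvx: "convex I" using assms(2) by (simp add: is_interval_convex)
  have sa: "smooth_on \<alpha> I" and ua: "\<And>s. s \<in> I \<Longrightarrow> norm (tangent \<alpha> s) = 1 \<and> curvature \<alpha> s > 0"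
    using assms(4) unfolding unit_speed_frenet_curve_def by auto
  have sb: "smooth_on \<beta> I" and ub: "\<And>s. s \<in> I \<Longrightarrow> norm (tangent \<beta> s) = 1 \<and> curvature \<beta> s > 0"
    using assms(6) unfolding unit_speed_frenet_curve_def by auto
  obtain x1 x2 where sx1: "smooth_on x1 I" and sx2: "smooth_on x2 I" and
    mate: "\<And>s. s \<in> I \<Longrightarrow> (x1 s)\<^sup>2 + (x2 s)\<^sup>2 = 1 \<and>
           (\<beta> has_vector_derivative (x1 s *\<^sub>R tangent \<alpha> s + x2 s *\<^sub>R normal \<alpha> s)) (at s) \<and>
           inner (vderiv 2 \<beta> s) (tangent \<alpha> s) = 0 \<and>
           inner (vderiv 2 \<beta> s) (normal \<alpha> s) = 0"
    using assms(5) unfolding osculating_mate_def by blast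
  define T where "T = vderiv 1 \<alpha>"
  define A2 where "A2 = vderiv 2 \<alpha>"
  define N where "N = (\<lambda>s. (1 / norm (A2 s)) *\<^sub>R A2 s)"
  define B2 where "B2 = vderiv 2 \<beta>"
  define Nb where "Nb = (\<lambda>s. (1 / norm (B2 s)) *\<^sub>R B2 s)"
  have tT: "tangent \<alpha> = T" by (rule ext) (simp add: tangent_def T_def)
  have nN: "normal \<alpha> = N" by (rule ext) (simp add: normal_def N_def curvature_def A2_def)
  have nNb: "normal \<beta> = Nb" by (rule ext) (simp add: normal_def Nb_def curvature_def B2_def)
  have A2nz: "\<And>s. s \<in> I \<Longrightarrow> A2 s \<noteq> 0" using ua by (auto simp: curvature_def A2_def)
  have B2nz: "\<And>s. s \<in> I \<Longrightarrow> B2 s \<noteq> 0" using ub by (auto simp: curvature_def B2_def)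
  have dT: "\<And>s. s \<in> I \<Longrightarrow> (T has_vector_derivative A2 s) (at s)"
    using smooth_D[OF sa, of _ 1] by (simp add: T_def A2_def numeral_2_eq_2)
  have dA2: "\<And>s. s \<in> I \<Longrightarrow> (A2 has_vector_derivative vderiv 3 \<alpha> s) (at s)"
    using smooth_D[OF sa, of _ 2] by (simp add: A2_def numeral_3_eq_3 numeral_2_eq_2)
  have dB2: "\<And>s. s \<in> I \<Longrightarrow> (B2 has_vector_derivative vderiv 3 \<beta> s) (at s)"
    using smooth_D[OF sb, of _ 2] by (simp add: B2_def numeral_3_eq_3 numeral_2_eq_2)
  have "\<forall>s\<in>I. \<exists>D. (N has_vector_derivative D) (at s)"
    using unit_deriv[OF dA2 A2nz] by (simp add: N_def)
  then obtain N' where dN: "\<And>s. s \<in> I \<Longrightarrow> (N has_vector_derivative N' s) (at s)" by metis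
  have "\<forall>s\<in>I. \<exists>D. (Nb has_vector_derivative D) (at s)"
    using unit_deriv[OF dB2 B2nz] by (simp add: Nb_def)
  then obtain Nb' where dNb: "\<And>s. s \<in> I \<Longrightarrow> (Nb has_vector_derivative Nb' s) (at s)" by metis
  have TT: "\<And>s. s \<in> I \<Longrightarrow> inner (T s) (T s) = 1"
    using ua by (simp add: tT dot_square_norm)
  have TA2: "\<And>s. s \<in> I \<Longrightarrow> inner (T s) (A2 s) = 0"
  proof -
    fix s assume s: "s \<in> I"
    have "inner (T s) (A2 s) + inner (A2 s) (T s) = 0"
      by (rule const_inner[OF opI s dT[OF s] dT[OF s], of 1]) (use TT in auto)
    then show "inner (T s) (A2 s) = 0" by (simp add: inner_commute)
  qed
  have NN: "\<And>s. s \<in> I \<Longrightarrow> inner (N s) (N s) = 1"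
    using A2nz by (simp add: N_def dot_square_norm power2_eq_square)
  have TN: "\<And>s. s \<in> I \<Longrightarrow> inner (T s) (N s) = 0"
    using TA2 by (simp add: N_def)
  have A2N: "\<And>s. s \<in> I \<Longrightarrow> A2 s = norm (A2 s) *\<^sub>R N s"
    using A2nz by (simp add: N_def)
  have NbNb: "\<And>s. s \<in> I \<Longrightarrow> inner (Nb s) (Nb s) = 1"
    using B2nz by (simp add: Nb_def dot_square_norm power2_eq_square)
  have NbT: "\<And>s. s \<in> I \<Longrightarrow> inner (Nb s) (T s) = 0"
    using mate by (simp add: Nb_def B2_def tT)
  have NbN: "\<And>s. s \<in> I \<Longrightarrow> inner (Nb s) (N s) = 0"
    using mate by (simp add: Nb_def B2_def nN)
  have NbA2: "\<And>s. s \<in> I \<Longrightarrow> inner (Nb s) (A2 s) = 0"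
  proof -
    fix s assume s: "s \<in> I"
    have "inner (Nb s) (A2 s) = inner (Nb s) (norm (A2 s) *\<^sub>R N s)" using A2N[OF s] by metis
    also have "\<dots> = 0" using NbN[OF s] by simp
    finally show "inner (Nb s) (A2 s) = 0" .
  qed
  have b1: "\<And>s. s \<in> I \<Longrightarrow> vderiv 1 \<beta> s = x1 s *\<^sub>R T s + x2 s *\<^sub>R N s"
  proof -
    fix s assume s: "s \<in> I"
    have "(\<beta> has_vector_derivative vderiv 1 \<beta> s) (at s)" using smooth_D[OF sb s, of 0] by simp
    from vector_derivative_at[OF this] vector_derivative_at[OF conjunct1[OF conjunct2[OF mate[OF s]]]]
    show "vderiv 1 \<beta> s = x1 s *\<^sub>R T s + x2 s *\<^sub>R N s" by (simp add: tT nN)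
  qed
  have B2f: "\<And>s. s \<in> I \<Longrightarrow> B2 s = (x1 s *\<^sub>R A2 s + vderiv 1 x1 s *\<^sub>R T s) + (x2 s *\<^sub>R N' s + vderiv 1 x2 s *\<^sub>R N s)"
  proof -
    fix s assume s: "s \<in> I"
    have dx1: "(x1 has_field_derivative vderiv 1 x1 s) (at s)"
      using smooth_D[OF sx1 s, of 0] by (simp add: has_real_derivative_iff_has_vector_derivative)
    have dx2: "(x2 has_field_derivative vderiv 1 x2 s) (at s)"
      using smooth_D[OF sx2 s, of 0] by (simp add: has_real_derivative_iff_has_vector_derivative)
    have "((\<lambda>t. x1 t *\<^sub>R T t + x2 t *\<^sub>R N t) has_vector_derivative
        (x1 s *\<^sub>R A2 s + vderiv 1 x1 s *\<^sub>R T s) + (x2 s *\<^sub>R N' s + vderiv 1 x2 s *\<^sub>R N s)) (at s)"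
      by (intro has_vector_derivative_add has_vector_derivative_scaleR dx1 dx2 dT[OF s] dN[OF s])
    then have "(vderiv 1 \<beta> has_vector_derivative
        (x1 s *\<^sub>R A2 s + vderiv 1 x1 s *\<^sub>R T s) + (x2 s *\<^sub>R N' s + vderiv 1 x2 s *\<^sub>R N s)) (at s)"
      by (rule has_vector_derivative_transform_within_open[OF _ opI s]) (rule b1[symmetric])
    from vector_derivative_at[OF this] show "B2 s = (x1 s *\<^sub>R A2 s + vderiv 1 x1 s *\<^sub>R T s) + (x2 s *\<^sub>R N' s + vderiv 1 x2 s *\<^sub>R N s)"
      by (simp add: B2_def vderiv2)
  qed
  have lam: "\<And>s. s \<in> I \<Longrightarrow> inner (Nb s) (N' s) \<noteq> 0"
  proof -
    fix s assume s: "s \<in> I"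
    have "inner (Nb s) (B2 s) = norm (B2 s)"
      using B2nz[OF s] by (simp add: Nb_def dot_square_norm power2_eq_square)
    moreover have "inner (Nb s) (B2 s) = x2 s * inner (Nb s) (N' s)"
      using B2f[OF s] NbA2[OF s] NbT[OF s] NbN[OF s]
      by (simp add: inner_add_right)
    ultimately show "inner (Nb s) (N' s) \<noteq> 0" using B2nz[OF s] by auto
  qed
  have key: "\<And>s u. s \<in> I \<Longrightarrow> inner (Nb' s) u = - inner (Nb s) (N' s) * inner (N s) u"
  proof -
    fix s u assume s: "s \<in> I"
    have e1: "inner (Nb s) (A2 s) + inner (Nb' s) (T s) = 0"
      by (rule const_inner[OF opI s dNb[OF s] dT[OF s], of 0]) (use NbT in auto)
    have e2: "inner (Nb s) (N' s) + inner (Nb' s) (N s) = 0"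
      by (rule const_inner[OF opI s dNb[OF s] dN[OF s], of 0]) (use NbN in auto)
    have e3: "inner (Nb s) (Nb' s) + inner (Nb' s) (Nb s) = 0"
      by (rule const_inner[OF opI s dNb[OF s] dNb[OF s], of 1]) (use NbNb in auto)
    have c1: "inner (Nb' s) (T s) = 0" using e1 NbA2[OF s] by simp
    have c2: "inner (Nb' s) (N s) = - inner (Nb s) (N' s)" using e2 by simp
    have c3: "inner (Nb' s) (Nb s) = 0" using e3 by (simp add: inner_commute)
    have "Nb' s = inner (Nb' s) (T s) *\<^sub>R T s + inner (Nb' s) (N s) *\<^sub>R N s + inner (Nb' s) (Nb s) *\<^sub>R Nb s"
      by (rule decomp3) (use TT NN NbNb TN NbT NbN s in \<open>auto simp: inner_commute\<close>)
    then have "Nb' s = (- inner (Nb s) (N' s)) *\<^sub>R N s" using c1 c2 c3 by simp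
    then show "inner (Nb' s) u = - inner (Nb s) (N' s) * inner (N s) u" by simp
  qed
  have part1: "general_helix (tangent \<beta>) I \<longleftrightarrow> slant_helix \<beta> I"
  proof -
    have tb: "tangent \<beta> = vderiv 1 \<beta>" by (rule ext) (simp add: tangent_def)
    have vv: "vderiv 1 (tangent \<beta>) = B2" by (simp add: tb B2_def vderiv2)
    show ?thesis unfolding general_helix_def slant_helix_def vv nNb Nb_def using B2nz by auto
  qed
  have part2: "slant_helix \<beta> I \<longleftrightarrow> general_helix \<alpha> I"
  proof
    assume "slant_helix \<beta> I"
    then obtain u c where u: "norm u = 1" and uc: "\<And>s. s \<in> I \<Longrightarrow> inner (Nb s) u = c"
      unfolding slant_helix_def nNb by blast
    have Nu: "\<And>s. s \<in> I \<Longrightarrow> inner (N s) u = 0"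
    proof -
      fix s assume s: "s \<in> I"
      have "inner (Nb s) 0 + inner (Nb' s) u = 0"
        by (rule const_inner[OF opI s dNb[OF s], of "\<lambda>_. u" 0 c]) (use uc in auto)
      then have "inner (Nb' s) u = 0" by simp
      then show "inner (N s) u = 0" using key[OF s, of u] lam[OF s] by simp
    qed
    have A2u: "\<And>s. s \<in> I \<Longrightarrow> inner (A2 s) u = 0"
    proof -
      fix s assume s: "s \<in> I"
      have "inner (A2 s) u = inner (norm (A2 s) *\<^sub>R N s) u" using A2N[OF s] by metis
      then show "inner (A2 s) u = 0" using Nu[OF s] by simp
    qed
    have "\<exists>c. \<forall>s\<in>I. inner (T s) u = c"
      by (rule inner_const_from_deriv[OF cvx, of T A2]) (use dT A2u in \<open>auto\<close>)
    then obtain c' where cT: "\<forall>s\<in>I. inner (T s) u = c'" by blast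
    have nT: "\<forall>s\<in>I. norm (T s) = 1" using ua by (simp add: tT)
    have nz: "\<forall>s\<in>I. T s \<noteq> 0" using nT by auto
    show "general_helix \<alpha> I"
      unfolding general_helix_def T_def[symmetric] using nT cT nz u by (intro conjI exI[of _ u] exI[of _ c']) auto
  next
    assume "general_helix \<alpha> I"
    then obtain u c where u: "norm u = 1" and uc: "\<And>s. s \<in> I \<Longrightarrow> inner ((1 / norm (T s)) *\<^sub>R T s) u = c"
      unfolding general_helix_def T_def by blast
    have uc': "\<And>s. s \<in> I \<Longrightarrow> inner (T s) u = c" using uc ua by (simp add: tT)
    have Nu: "\<And>s. s \<in> I \<Longrightarrow> inner (N s) u = 0"
    proof -
      fix s assume s: "s \<in> I"
      have "inner (T s) 0 + inner (A2 s) u = 0"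
        by (rule const_inner[OF opI s dT[OF s], of "\<lambda>_. u" 0 c]) (use uc' in auto)
      then have "inner (A2 s) u = 0" by simp
      then have "inner (norm (A2 s) *\<^sub>R N s) u = 0" using A2N[OF s] by metis
      then have "norm (A2 s) * inner (N s) u = 0" by simp
      then show "inner (N s) u = 0" using A2nz[OF s] by simp
    qed
    have "\<exists>c. \<forall>s\<in>I. inner (Nb s) u = c"
      by (rule inner_const_from_deriv[OF cvx, of Nb Nb']) (use dNb key Nu in \<open>auto\<close>)
    then show "slant_helix \<beta> I" unfolding slant_helix_def nNb using u by blast
  qed
  show ?thesis using part1 part2 by blast
qed

end
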